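(* Given any $n$ binary sequences $\boldsymbol{\mu}: [n] \to \{0,1\}^k$, there is always an optimal solution of the AML problem (in either of its two equivalent versions) whose ancestral assignment has the form $\boldsymbol{\lambda} = \bar{\boldsymbol{\mu}}_f$ for some map $f: \{0,1\}^{[n]} \to \{0,1\}^{V-[n]}$, where $V$ is the vertex set of the tree of that solution.
   Context: $[n]=\{0,\ldots,n-1\}$; $\mathcal{T}_n$ is the set of trees whose $n$ leaves are labelled by $[n]$. AML, Version 1: given $\boldsymbol{\mu}$, find $T=(V,E)\in\mathcal{T}_n$, $\mathbf{p}:E\to[0,1/2]$ and $\boldsymbol{\lambda}:V\to\{0,1\}^k$ with $\lambda_v=\mu_v$ for all leaves $v\in[n]$, minimizing $-\log_2\prod_{e\in E}p_e^{d_e}(1-p_e)^{k-d_e}$, where $d_{u,v}=\|\lambda_u-\lambda_v\|_1$. AML, Version 2: find $T\in\mathcal{T}_n$ and such $\boldsymbol{\lambda}$ minimizing $\sum_{e\in E}H(d_e/k)$ with $H(p)=-p\log_2p-(1-p)\log_2(1-p)$ (obtained from Version 1 by setting $p_e=d_e/k$). For $1\le j\le k$, the $j$-th character of $\boldsymbol{\mu}$ is $\chi\in\{0,1\}^{[n]}$ with $\chi_u=(\mu_u)_j$. Given $f:\{0,1\}^{[n]}\to\{0,1\}^{V-[n]}$, the extension $\bar{\boldsymbol{\mu}}_f:V\to\{0,1\}^k$ is defined characterwise: for each character $\chi$ (the $j$-th), $(\bar\mu_f)_v$ has $j$-th coordinate $\chi_v$ if $v\in[n]$ and $f(\chi)_v$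 if $v\in V-[n]$. *)

theory Defs
  imports Complex_Main "HOL-Library.Extended_Real"
begin

text \<open>Vertices are natural numbers; the vertex set V is a finite set of naturals,
  and an (undirected) edge {u,v} is stored once as the pair (u,v) with u < v.\<close>

definition adj :: "(nat \<times> nat) set \<Rightarrow> (nat \<times> nat) set" where
  "adj E = E \<union> E\<inverse>"

definition connected_graph :: "nat set \<Rightarrow> (nat \<times> nat) set \<Rightarrow> bool" where
  "connected_graph V E \<longleftrightarrow> (\<forall>u\<in>V. \<forall>v\<in>V. (u, v) \<in> (adj E)\<^sup>*)"

definition is_tree :: "nat set \<Rightarrow> (nat \<times> nat) set \<Rightarrow> bool" where
  "is_tree V E \<longleftrightarrow> finite V \<and> V \<noteq> {} \<and>
     E \<subseteq> {(u, v). u \<in> V \<and> v \<in> V \<and> u < v} \<and>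
     connected_graph V E \<and> (\<forall>e\<in>E. \<not> connected_graph V (E - {e}))"

definition degree :: "(nat \<times> nat) set \<Rightarrow> nat \<Rightarrow> nat" where
  "degree E v = card {e \<in> E. fst e = v \<or> snd e = v}"

definition tree_n :: "nat \<Rightarrow> nat set \<Rightarrow> (nat \<times> nat) set \<Rightarrow> bool" where
  "tree_n n V E \<longleftrightarrow> is_tree V E \<and> {0..<n} \<subseteq> V \<and>
     (\<forall>v\<in>V. v < n \<longleftrightarrow> degree E v \<le> 1)"

text \<open>Binary sequences in {0,1}^k are bool lists of length k.\<close>
definition hamming :: "nat \<Rightarrow> bool list \<Rightarrow> bool list \<Rightarrow> nat" where
  "hamming k x y = card {j. j < k \<and> x ! j \<noteq> y ! j}"

definition edge_dist :: "nat \<Rightarrow> (nat \<Rightarrow> bool list) \<Rightarrow> nat \<times> nat \<Rightarrow> nat" where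
  "edge_dist k lam e = hamming k (lam (fst e)) (lam (snd e))"

definition H :: "real \<Rightarrow> real" where
  "H p = - p * log 2 p - (1 - p) * log 2 (1 - p)"

definition likelihood :: "nat \<Rightarrow> (nat \<times> nat) set \<Rightarrow> (nat \<times> nat \<Rightarrow> real)
    \<Rightarrow> (nat \<Rightarrow> bool list) \<Rightarrow> real" where
  "likelihood k E p lam =
     (\<Prod>e\<in>E. p e ^ edge_dist k lam e * (1 - p e) ^ (k - edge_dist k lam e))"

definition cost1 :: "nat \<Rightarrow> (nat \<times> nat) set \<Rightarrow> (nat \<times> nat \<Rightarrow> real)
    \<Rightarrow> (nat \<Rightarrow> bool list) \<Rightarrow> ereal" where
  "cost1 k E p lam =
     (if likelihood k E p lam = 0 then \<infinity> else ereal (- log 2 (likelihood k E p lam)))"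

definition cost2 :: "nat \<Rightarrow> (nat \<times> nat) set \<Rightarrow> (nat \<Rightarrow> bool list) \<Rightarrow> real" where
  "cost2 k E lam = (\<Sum>e\<in>E. H (real (edge_dist k lam e) / real k))"

definition assignment_ok :: "nat \<Rightarrow> nat \<Rightarrow> (nat \<Rightarrow> bool list) \<Rightarrow> nat set
    \<Rightarrow> (nat \<Rightarrow> bool list) \<Rightarrow> bool" where
  "assignment_ok n k mu V lam \<longleftrightarrow>
     (\<forall>v\<in>V. length (lam v) = k) \<and> (\<forall>v<n. lam v = mu v)"

definition AML1_feasible :: "nat \<Rightarrow> nat \<Rightarrow> (nat \<Rightarrow> bool list) \<Rightarrow> nat set
    \<Rightarrow> (nat \<times> nat) set \<Rightarrow> (nat \<times> nat \<Rightarrow> real) \<Rightarrow> (nat \<Rightarrow> bool list) \<Rightarrow> bool" where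
  "AML1_feasible n k mu V E p lam \<longleftrightarrow> tree_n n V E \<and>
     (\<forall>e\<in>E. 0 \<le> p e \<and> p e \<le> 1/2) \<and> assignment_ok n k mu V lam"

definition AML1_optimal :: "nat \<Rightarrow> nat \<Rightarrow> (nat \<Rightarrow> bool list) \<Rightarrow> nat set
    \<Rightarrow> (nat \<times> nat) set \<Rightarrow> (nat \<times> nat \<Rightarrow> real) \<Rightarrow> (nat \<Rightarrow> bool list) \<Rightarrow> bool" where
  "AML1_optimal n k mu V E p lam \<longleftrightarrow> AML1_feasible n k mu V E p lam \<and>
     (\<forall>V' E' p' lam'. AML1_feasible n k mu V' E' p' lam' \<longrightarrow>
        cost1 k E p lam \<le> cost1 k E' p' lam')"

definition AML2_feasible :: "nat \<Rightarrow> nat \<Rightarrow> (nat \<Rightarrow> bool list) \<Rightarrow> nat set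
    \<Rightarrow> (nat \<times> nat) set \<Rightarrow> (nat \<Rightarrow> bool list) \<Rightarrow> bool" where
  "AML2_feasible n k mu V E lam \<longleftrightarrow> tree_n n V E \<and> assignment_ok n k mu V lam"

definition AML2_optimal :: "nat \<Rightarrow> nat \<Rightarrow> (nat \<Rightarrow> bool list) \<Rightarrow> nat set
    \<Rightarrow> (nat \<times> nat) set \<Rightarrow> (nat \<Rightarrow> bool list) \<Rightarrow> bool" where
  "AML2_optimal n k mu V E lam \<longleftrightarrow> AML2_feasible n k mu V E lam \<and>
     (\<forall>V' E' lam'. AML2_feasible n k mu V' E' lam' \<longrightarrow> cost2 k E lam \<le> cost2 k E' lam')"

text \<open>The j-th character, an element of {0,1}^[n] (bool list of length n).\<close>
definition character :: "nat \<Rightarrow> (nat \<Rightarrow> bool list) \<Rightarrow> nat \<Rightarrow> bool list" where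
  "character n mu j = map (\<lambda>u. mu u ! j) [0..<n]"

text \<open>f maps a character to an element of {0,1}^(V-[n]) (only its values on
  V-[n] are used).\<close>
definition ext :: "nat \<Rightarrow> nat \<Rightarrow> (nat \<Rightarrow> bool list) \<Rightarrow> (bool list \<Rightarrow> nat \<Rightarrow> bool)
    \<Rightarrow> nat \<Rightarrow> bool list" where
  "ext n k mu f v = map (\<lambda>j. if v < n then mu v ! j else f (character n mu j) v) [0..<k]"

end

theory Submission
  imports Defs "HOL-Library.FuncSet"
begin


definition Lk :: "nat \<Rightarrow> (nat \<times> nat) set \<Rightarrow> (nat \<times> nat \<Rightarrow> real) \<Rightarrow> (nat \<times> nat \<Rightarrow> real)
   \<Rightarrow> (nat \<Rightarrow> bool list) \<Rightarrow> real" where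
 "Lk k E a b lam = (\<Prod>e\<in>E. a e ^ edge_dist k lam e * b e ^ (k - edge_dist k lam e))"

definition Qc :: "(nat \<times> nat) set \<Rightarrow> (nat \<times> nat \<Rightarrow> real) \<Rightarrow> (nat \<times> nat \<Rightarrow> real)
   \<Rightarrow> (nat \<Rightarrow> bool) \<Rightarrow> real" where
 "Qc E a b c = (\<Prod>e\<in>E. if c (fst e) \<noteq> c (snd e) then a e else b e)"

lemma pow_split:
  fixes a b :: real
  shows "a ^ card {j. j < k \<and> P j} * b ^ (k - card {j. j < k \<and> P j})
       = (\<Prod>j<k. if P j then a else b)"
proof -
  have "(\<Prod>j<k. if P j then a else b) = (\<Prod>j\<in>{..<k} \<inter> {j. P j}. a) * (\<Prod>j\<in>{..<k} \<inter> - {j. P j}. b)"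
    by (rule prod.If_cases) simp
  also have "{..<k} \<inter> {j. P j} = {j. j < k \<and> P j}" by auto
  also have "card ({..<k} \<inter> - {j. P j}) = k - card {j. j < k \<and> P j}"
  proof -
    have "{..<k} \<inter> - {j. P j} = {..<k} - {j. j < k \<and> P j}" by auto
    moreover have "card ({..<k} - {j. j < k \<and> P j}) = k - card {j. j < k \<and> P j}"
      by (subst card_Diff_subset) auto
    ultimately show ?thesis by simp
  qed
  ultimately show ?thesis by (simp add: prod_constant)
qed

lemma Lk_cols: "Lk k E a b lam = (\<Prod>j<k. Qc E a b (\<lambda>v. lam v ! j))"
proof -
  have "Lk k E a b lam = (\<Prod>e\<in>E. \<Prod>j<k. if lam (fst e) ! j \<noteq> lam (snd e) ! j then a e else b e)"
    unfolding Lk_def edge_dist_def hamming_def by (simp add: pow_split)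
  also have "\<dots> = (\<Prod>j<k. \<Prod>e\<in>E. if lam (fst e) ! j \<noteq> lam (snd e) ! j then a e else b e)"
    by (rule prod.swap)
  finally show ?thesis unfolding Qc_def .
qed

lemma lemmaA:
  assumes finE: "finite E" and nn: "\<forall>e\<in>E. a e \<ge> 0 \<and> b e \<ge> 0"
    and leaves: "\<forall>v<n. lam v = mu v"
  shows "\<exists>f. Lk k E a b lam \<le> Lk k E a b (ext n k mu f)"
proof -
  define q where "q j = Qc E a b (\<lambda>v. lam v ! j)" for j
  define S where "S \<chi> = {j. j < k \<and> character n mu j = \<chi>}" for \<chi>
  define js where "js \<chi> = (SOME j. j \<in> S \<chi> \<and> (\<forall>j'\<in>S \<chi>. q j' \<le> q j))" for \<chi>
  define f where "f \<chi> v = lam v ! js \<chi>" for \<chi> v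
  have qnn: "q j \<ge> 0" for j unfolding q_def Qc_def using nn by (auto intro: prod_nonneg)
  have jsP: "js (character n mu j) \<in> S (character n mu j) \<and>
     (\<forall>j'\<in>S (character n mu j). q j' \<le> q (js (character n mu j)))" if "j < k" for j
  proof -
    let ?S = "S (character n mu j)"
    have fin: "finite ?S" unfolding S_def by auto
    have ne: "j \<in> ?S" using that unfolding S_def by auto
    have "Max (q ` ?S) \<in> q ` ?S" using fin ne by (intro Max_in) auto
    then obtain j0 where j0: "j0 \<in> ?S" "q j0 = Max (q ` ?S)" by auto
    have "\<forall>j'\<in>?S. q j' \<le> q j0" using j0 fin by auto
    with j0 have "\<exists>j0. j0 \<in> ?S \<and> (\<forall>j'\<in>?S. q j' \<le> q j0)" by blast
    then show ?thesis unfolding js_def by (rule someI_ex)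
  qed
  have col: "(\<lambda>v. ext n k mu f v ! j) = (\<lambda>v. lam v ! js (character n mu j))" if "j < k" for j
  proof
    fix v
    let ?j = "js (character n mu j)"
    have jk: "?j < k" and ch: "character n mu ?j = character n mu j"
      using jsP[OF that] unfolding S_def by auto
    show "ext n k mu f v ! j = lam v ! ?j"
    proof (cases "v < n")
      case True
      have "character n mu ?j ! v = character n mu j ! v" using ch by simp
      then have "mu v ! ?j = mu v ! j" using True unfolding character_def by simp
      then show ?thesis using True that leaves unfolding ext_def by simp
    next
      case False
      then show ?thesis using that unfolding ext_def f_def by simp
    qed
  qed
  have "Lk k E a b lam = (\<Prod>j<k. q j)" unfolding Lk_cols q_def ..
  also have "\<dots> \<le> (\<Prod>j<k. q (js (character n mu j)))"
    by (rule prod_mono) (use qnn jsP S_def in auto)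
  also have "\<dots> = Lk k E a b (ext n k mu f)"
    unfolding Lk_cols q_def by (rule prod.cong) (use col in auto)
  finally show ?thesis by blast
qed



lemma min_exists:
  fixes P :: "'a \<Rightarrow> bool" and Es :: "'a \<Rightarrow> (nat \<times> nat) set" and dd :: "'a \<Rightarrow> nat \<times> nat \<Rightarrow> nat"
    and h :: "nat \<Rightarrow> real"
  assumes xz: "P xz" and fin: "\<And>x. P x \<Longrightarrow> finite (Es x)"
    and bnd: "\<And>x e. P x \<Longrightarrow> e \<in> Es x \<Longrightarrow> dd x e \<le> k"
    and hpos: "\<And>d. d \<le> k \<Longrightarrow> h d \<ge> 0"
  shows "\<exists>x. P x \<and> (\<forall>y. P y \<longrightarrow> (\<Sum>e\<in>Es x. h (dd x e)) \<le> (\<Sum>e\<in>Es y. h (dd y e)))"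
proof -
  define c where "c x = (\<Sum>e\<in>Es x. h (dd x e))" for x
  define Pos where "Pos = {d. d \<le> k \<and> h d > 0}"
  define eps where "eps = Min (insert 1 (h ` Pos))"
  have finPos: "finite Pos" unfolding Pos_def by auto
  have eps_pos: "eps > 0" unfolding eps_def using finPos by (auto simp: Pos_def)
  have eps_le: "eps \<le> h d" if "d \<le> k" "h d > 0" for d
    unfolding eps_def using finPos that by (intro Min_le) (auto simp: Pos_def)
  define N where "N = nat \<lceil>c xz / eps\<rceil>"
  define D where "D = {..k}"
  define F where "F = (\<lambda>m. \<Sum>d\<in>D. real (m d) * h d) ` (PiE D (\<lambda>_. {..N}))"
  have finF: "finite F" unfolding F_def D_def by (intro finite_imageI finite_PiE) auto
  have key: "c x \<in> F" if Px: "P x" and le: "c x \<le> c xz" for x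
  proof -
    define m where "m = (\<lambda>d\<in>D. if h d > 0 then card {e\<in>Es x. dd x e = d} else 0)"
    have "c x = (\<Sum>d\<in>D. \<Sum>e\<in>{e\<in>Es x. dd x e = d}. h (dd x e))"
      unfolding c_def by (rule sum.group[symmetric]) (use fin[OF Px] bnd[OF Px] in \<open>auto simp: D_def\<close>)
    also have "\<dots> = (\<Sum>d\<in>D. real (card {e\<in>Es x. dd x e = d}) * h d)"
      by (rule sum.cong) auto
    finally have cx: "c x = (\<Sum>d\<in>D. real (card {e\<in>Es x. dd x e = d}) * h d)" .
    have nn: "0 \<le> real (card {e\<in>Es x. dd x e = d}) * h d" if "d \<in> D" for d
      using hpos that by (auto simp: D_def)
    have cx2: "c x = (\<Sum>d\<in>D. real (m d) * h d)"
      unfolding cx by (rule sum.cong) (use hpos in \<open>force simp: m_def D_def\<close>)+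
    have "m \<in> PiE D (\<lambda>_. {..N})"
    proof
      fix d assume dD: "d \<in> D"
      show "m d \<in> {..N}"
      proof (cases "h d > 0")
        case True
        have "real (card {e\<in>Es x. dd x e = d}) * h d \<le> c x"
          unfolding cx by (rule member_le_sum) (use dD nn in \<open>auto simp: D_def\<close>)
        moreover have "real (card {e\<in>Es x. dd x e = d}) * eps \<le> real (card {e\<in>Es x. dd x e = d}) * h d"
          using eps_le True dD by (intro mult_left_mono) (auto simp: D_def)
        ultimately have "real (card {e\<in>Es x. dd x e = d}) * eps \<le> c xz" using le by linarith
        then have "real (card {e\<in>Es x. dd x e = d}) \<le> c xz / eps"
          using eps_pos by (simp add: field_simps)
        then have "card {e\<in>Es x. dd x e = d} \<le> N" unfolding N_def by linarith
        then show ?thesis using True dD by (simp add: m_def)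
      qed (use dD in \<open>simp add: m_def\<close>)
    next
      fix d assume "d \<notin> D" then show "m d = undefined" by (simp add: m_def)
    qed
    then show ?thesis unfolding F_def cx2 by blast
  qed
  define C where "C = {c x | x. P x \<and> c x \<le> c xz}"
  have finC: "finite C" by (rule finite_subset[OF _ finF]) (use key in \<open>auto simp: C_def\<close>)
  have "c xz \<in> C" using xz by (auto simp: C_def)
  then have "Min C \<in> C" using finC by (intro Min_in) auto
  then obtain x where Px: "P x" and cxm: "c x = Min C" and "c x \<le> c xz" by (auto simp: C_def)
  have "\<forall>y. P y \<longrightarrow> c x \<le> c y"
  proof (intro allI impI)
    fix y assume Py: "P y"
    show "c x \<le> c y"
    proof (cases "c y \<le> c xz")
      case True then have "c y \<in> C" using Py by (auto simp: C_def)
      then show ?thesis using cxm finC by simp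
    next
      case False then show ?thesis using \<open>c x \<le> c xz\<close> by simp
    qed
  qed
  then show ?thesis using Px unfolding c_def by blast
qed



lemma isolated:
  assumes "\<forall>e\<in>E. fst e \<noteq> u \<and> snd e \<noteq> u" and "(u, w) \<in> (adj E)\<^sup>*"
  shows "w = u"
  using assms(2)
proof (induction rule: rtrancl_induct)
  case base then show ?case by simp
next
  case (step y z)
  then show ?case using assms(1) unfolding adj_def by force
qed

lemma tree_exists:
  assumes "n \<ge> 1"
  shows "\<exists>V E. tree_n n V E"
proof (cases "n = 1")
  case True
  have "tree_n n {0} {}"
    unfolding tree_n_def is_tree_def connected_graph_def degree_def using True by auto
  then show ?thesis by blast
next
  case False
  with assms have n2: "n \<ge> 2" by simp
  define V where "V = {..n}"
  define E where "E = (\<lambda>u. (u, n)) ` {..<n}"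
  have adjn: "(u, n) \<in> (adj E)\<^sup>*" "(n, u) \<in> (adj E)\<^sup>*" if "u \<in> V" for u
  proof -
    have "(u, n) \<in> adj E \<or> u = n" using that unfolding adj_def E_def V_def by auto
    then show "(u, n) \<in> (adj E)\<^sup>*" by auto
    have "(n, u) \<in> adj E \<or> u = n" using that unfolding adj_def E_def V_def by auto
    then show "(n, u) \<in> (adj E)\<^sup>*" by auto
  qed
  have conn: "connected_graph V E" unfolding connected_graph_def
    using adjn by (meson rtrancl_trans)
  have minimal: "\<not> connected_graph V (E - {e})" if eE: "e \<in> E" for e
  proof
    assume c: "connected_graph V (E - {e})"
    obtain u where u: "u < n" "e = (u, n)" using eE unfolding E_def by auto
    have "\<forall>e'\<in>E - {e}. fst e' \<noteq> u \<and> snd e' \<noteq> u" using u unfolding E_def by auto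
    moreover have "(u, n) \<in> (adj (E - {e}))\<^sup>*" using c u unfolding connected_graph_def V_def by auto
    ultimately have "n = u" by (rule isolated)
    with u show False by simp
  qed
  have degc: "degree E n = n"
  proof -
    have "{e \<in> E. fst e = n \<or> snd e = n} = E" unfolding E_def by auto
    moreover have "card E = n" unfolding E_def by (subst card_image) (auto simp: inj_on_def)
    ultimately show ?thesis unfolding degree_def by simp
  qed
  have degl: "degree E u = 1" if "u < n" for u
  proof -
    have "{e \<in> E. fst e = u \<or> snd e = u} = {(u, n)}" using that unfolding E_def by auto
    then show ?thesis unfolding degree_def by simp
  qed
  have "tree_n n V E"
    unfolding tree_n_def is_tree_def
  proof (intro conjI ballI)
    show "E \<subseteq> {(u, v). u \<in> V \<and> v \<in> V \<and> u < v}" unfolding E_def V_def by auto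
    fix v assume "v \<in> V"
    then have "v < n \<or> v = n" unfolding V_def by auto
    then show "(v < n) = (degree E v \<le> 1)" using degc degl n2 by auto
  qed (use conn minimal in \<open>auto simp: V_def\<close>)
  then show ?thesis by blast
qed

lemma tree_finE: "tree_n n V E \<Longrightarrow> finite E"
  unfolding tree_n_def is_tree_def
  by (rule finite_subset[of _ "V \<times> V"]) auto

lemma edge_dist_le: "edge_dist k lam e \<le> k"
proof -
  have "{j. j < k \<and> lam (fst e) ! j \<noteq> lam (snd e) ! j} \<subseteq> {..<k}" by auto
  then have "card {j. j < k \<and> lam (fst e) ! j \<noteq> lam (snd e) ! j} \<le> card {..<k}"
    by (rule card_mono[rotated]) auto
  then show ?thesis unfolding edge_dist_def hamming_def by simp
qed

lemma feasible_exists: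
  assumes "n \<ge> 1" "\<forall>u<n. length (mu u) = k"
  shows "\<exists>V E lam. tree_n n V E \<and> assignment_ok n k mu V lam"
proof -
  obtain V E where "tree_n n V E" using tree_exists assms by blast
  moreover have "assignment_ok n k mu V (\<lambda>v. if v < n then mu v else replicate k False)"
    unfolding assignment_ok_def using assms by auto
  ultimately show ?thesis by blast
qed

lemma log_prod2:
  assumes "finite E" "\<And>e. e \<in> E \<Longrightarrow> g e > 0"
  shows "log 2 (\<Prod>e\<in>E. g e) = (\<Sum>e\<in>E. log 2 (g e))"
  unfolding log_def using assms by (subst ln_prod) (force, force, simp add: sum_divide_distrib)



definition phi :: "nat \<Rightarrow> nat \<Rightarrow> real \<Rightarrow> real" where
  "phi k d p = p ^ d * (1 - p) ^ (k - d)"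

lemma phi_max: "\<exists>q. 0 \<le> q \<and> q \<le> 1/2 \<and> (\<forall>p. 0 \<le> p \<and> p \<le> 1/2 \<longrightarrow> phi k d p \<le> phi k d q)"
proof -
  have "\<exists>M. (\<forall>x. 0 \<le> x \<and> x \<le> 1/2 \<longrightarrow> phi k d x \<le> M) \<and> (\<exists>x\<ge>0. x \<le> 1/2 \<and> phi k d x = M)"
    by (rule isCont_eq_Ub) (auto simp: phi_def intro!: continuous_intros)
  then show ?thesis by metis
qed

definition qq :: "nat \<Rightarrow> nat \<Rightarrow> real" where
  "qq k d = (SOME q. 0 \<le> q \<and> q \<le> 1/2 \<and> (\<forall>p. 0 \<le> p \<and> p \<le> 1/2 \<longrightarrow> phi k d p \<le> phi k d q))"

definition bb :: "nat \<Rightarrow> nat \<Rightarrow> real" where "bb k d = phi k d (qq k d)"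

lemma qq: "0 \<le> qq k d" "qq k d \<le> 1/2" "0 \<le> p \<Longrightarrow> p \<le> 1/2 \<Longrightarrow> phi k d p \<le> bb k d"
  using someI_ex[OF phi_max[of k d]] unfolding qq_def[symmetric] bb_def by auto

lemma phi_le1: "0 \<le> p \<Longrightarrow> p \<le> 1 \<Longrightarrow> phi k d p \<le> 1"
  unfolding phi_def by (intro mult_le_one power_le_one) auto

lemma phi_nn: "0 \<le> p \<Longrightarrow> p \<le> 1 \<Longrightarrow> 0 \<le> phi k d p"
  unfolding phi_def by auto

lemma bb_pos: "bb k d > 0"
proof -
  have "phi k d (1/2) > 0" unfolding phi_def by simp
  then show ?thesis using qq(3)[of "1/2" k d] by simp
qed

lemma bb_le1: "bb k d \<le> 1" unfolding bb_def using qq[of k d] phi_le1 by auto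

lemma bb0: "bb k 0 = 1"
  using qq(3)[of 0 k 0] bb_le1[of k 0] by (simp add: phi_def)

lemma bb_half: "d \<ge> 1 \<Longrightarrow> bb k d \<le> 1/2"
proof -
  assume d: "d \<ge> 1"
  let ?q = "qq k d"
  have "?q ^ d \<le> ?q ^ 1" using qq[of k d] d by (intro power_decreasing) auto
  moreover have "(1 - ?q) ^ (k - d) \<le> 1" using qq[of k d] by (intro power_le_one) auto
  moreover have "0 \<le> ?q ^ d" using qq[of k d] by simp
  ultimately have "phi k d ?q \<le> ?q" unfolding phi_def
    using mult_mono[of "?q ^ d" "?q" "(1 - ?q) ^ (k - d)" 1] qq[of k d] by auto
  then show ?thesis using qq[of k d] unfolding bb_def by simp
qed

lemma h1_nn: "0 \<le> - log 2 (bb k d)"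
  using bb_pos[of k d] bb_le1[of k d] by simp

lemma h1_nn': "log 2 (bb k d) \<le> 0"
  using h1_nn[of k d] by simp

lemma lik_Lk: "likelihood k E p lam = Lk k E p (\<lambda>e. 1 - p e) lam"
  unfolding likelihood_def Lk_def ..

lemma ext_ok:
  assumes "\<forall>u<n. length (mu u) = k"
  shows "assignment_ok n k mu V (ext n k mu f)"
  unfolding assignment_ok_def ext_def
proof (intro conjI allI ballI impI)
  fix v assume v: "v < n"
  show "map (\<lambda>j. if v < n then mu v ! j else f (character n mu j) v) [0..<k] = mu v"
    using v assms by (intro nth_equalityI) auto
qed simp

lemma lik_nn: "\<forall>e\<in>E. 0 \<le> p e \<and> p e \<le> 1/2 \<Longrightarrow> 0 \<le> likelihood k E p lam"
  unfolding likelihood_def by (auto intro!: prod_nonneg)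

lemma lik_le_bb:
  assumes "\<forall>e\<in>E. 0 \<le> p e \<and> p e \<le> 1/2"
  shows "likelihood k E p lam \<le> (\<Prod>e\<in>E. bb k (edge_dist k lam e))"
  unfolding likelihood_def
  by (rule prod_mono) (use assms qq(3) in \<open>auto simp: phi_def\<close>)

theorem version1:
  assumes n1: "n \<ge> 1" and len: "\<forall>u<n. length (mu u) = k"
  shows "\<exists>V E p lam f. AML1_optimal n k mu V E p lam \<and> (\<forall>v\<in>V. lam v = ext n k mu f v)"
proof -
  define P where "P = (\<lambda>(x :: nat set \<times> (nat \<times> nat) set \<times> (nat \<Rightarrow> bool list)).
      tree_n n (fst x) (fst (snd x)) \<and> assignment_ok n k mu (fst x) (snd (snd x)))"
  obtain V0 E0 lam0 where "tree_n n V0 E0 \<and> assignment_ok n k mu V0 lam0"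
    using feasible_exists[OF n1 len] by blast
  then have x0: "P (V0, E0, lam0)" unfolding P_def by simp
  have "\<exists>x. P x \<and> (\<forall>y. P y \<longrightarrow>
      (\<Sum>e\<in>fst (snd x). - log 2 (bb k (edge_dist k (snd (snd x)) e)))
      \<le> (\<Sum>e\<in>fst (snd y). - log 2 (bb k (edge_dist k (snd (snd y)) e))))"
    by (rule min_exists[where P = P and xz = "(V0, E0, lam0)" and Es = "\<lambda>x. fst (snd x)"
           and dd = "\<lambda>x e. edge_dist k (snd (snd x)) e" and k = k and h = "\<lambda>d. - log 2 (bb k d)"])
       (use x0 in \<open>auto simp: P_def intro: tree_finE edge_dist_le h1_nn'\<close>)
  then obtain xx where Pxx: "P xx" and optx: "\<forall>y. P y \<longrightarrow>
      (\<Sum>e\<in>fst (snd xx). - log 2 (bb k (edge_dist k (snd (snd xx)) e)))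
      \<le> (\<Sum>e\<in>fst (snd y). - log 2 (bb k (edge_dist k (snd (snd y)) e)))" by blast
  obtain V E lam where xx: "xx = (V, E, lam)" by (cases xx) blast
  have P: "P (V, E, lam)" using Pxx xx by simp
  have opt: "(\<Sum>e\<in>E. - log 2 (bb k (edge_dist k lam e))) \<le> (\<Sum>e\<in>E'. - log 2 (bb k (edge_dist k lam' e)))"
    if "P (V', E', lam')" for V' E' lam'
    using optx[rule_format, OF that] xx by simp
  have tr: "tree_n n V E" and ok: "assignment_ok n k mu V lam" using P by (auto simp: P_def)
  have finE: "finite E" using tr by (rule tree_finE)
  define p where "p e = qq k (edge_dist k lam e)" for e
  have prange: "\<forall>e\<in>E. 0 \<le> p e \<and> p e \<le> 1/2" using qq unfolding p_def by auto
  have lamL: "likelihood k E p lam = (\<Prod>e\<in>E. bb k (edge_dist k lam e))"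
    unfolding likelihood_def bb_def phi_def p_def ..
  obtain f where f: "Lk k E p (\<lambda>e. 1 - p e) lam \<le> Lk k E p (\<lambda>e. 1 - p e) (ext n k mu f)"
  proof -
    have "\<forall>e\<in>E. p e \<ge> 0 \<and> 1 - p e \<ge> 0" using prange by auto
    moreover have "\<forall>v<n. lam v = mu v" using ok unfolding assignment_ok_def by auto
    ultimately show ?thesis using lemmaA[OF finE, of p "\<lambda>e. 1 - p e" n lam mu k] that by blast
  qed
  define lam' where "lam' = ext n k mu f"
  define B where "B = (\<Prod>e\<in>E. bb k (edge_dist k lam e))"
  have Bpos: "B > 0" unfolding B_def using bb_pos by (auto intro: prod_pos)
  have L'ge: "B \<le> likelihood k E p lam'" using f lamL unfolding lik_Lk lam'_def B_def by simp
  have logB: "log 2 B = - (\<Sum>e\<in>E. - log 2 (bb k (edge_dist k lam e)))"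
    unfolding B_def by (subst log_prod2) (use finE bb_pos in \<open>auto simp: sum_negf\<close>)
  have c1: "cost1 k E p lam' \<le> ereal (- log 2 B)"
    using L'ge Bpos unfolding cost1_def by auto
  have "AML1_optimal n k mu V E p lam'"
    unfolding AML1_optimal_def AML1_feasible_def
  proof (intro conjI allI impI)
    show "tree_n n V E" by (rule tr)
    show "\<forall>e\<in>E. 0 \<le> p e \<and> p e \<le> 1 / 2" by (rule prange)
    show "assignment_ok n k mu V lam'" unfolding lam'_def by (rule ext_ok[OF len])
    fix V' E' and p' :: "nat \<times> nat \<Rightarrow> real" and lam''
    assume "tree_n n V' E' \<and> (\<forall>e\<in>E'. 0 \<le> p' e \<and> p' e \<le> 1 / 2) \<and> assignment_ok n k mu V' lam''"
    then have tr': "tree_n n V' E'" and pr': "\<forall>e\<in>E'. 0 \<le> p' e \<and> p' e \<le> 1 / 2"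
      and ok': "assignment_ok n k mu V' lam''" by auto
    have finE': "finite E'" using tr' by (rule tree_finE)
    define B' where "B' = (\<Prod>e\<in>E'. bb k (edge_dist k lam'' e))"
    have B'pos: "B' > 0" unfolding B'_def using bb_pos by (auto intro: prod_pos)
    have logB': "log 2 B' = - (\<Sum>e\<in>E'. - log 2 (bb k (edge_dist k lam'' e)))"
      unfolding B'_def by (subst log_prod2) (use finE' bb_pos in \<open>auto simp: sum_negf\<close>)
    have "log 2 B' \<le> log 2 B" using opt[of V' E' lam''] tr' ok' logB logB' by (simp add: P_def)
    have Lle: "likelihood k E' p' lam'' \<le> B'" unfolding B'_def by (rule lik_le_bb[OF pr'])
    have Lnn: "0 \<le> likelihood k E' p' lam''" by (rule lik_nn[OF pr'])
    show "cost1 k E p lam' \<le> cost1 k E' p' lam''"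
    proof (cases "likelihood k E' p' lam'' = 0")
      case True then show ?thesis unfolding cost1_def[of k E' p' lam''] by simp
    next
      case False
      then have "log 2 (likelihood k E' p' lam'') \<le> log 2 B'" using Lle Lnn by simp
      then have "- log 2 B \<le> - log 2 (likelihood k E' p' lam'')"
        using \<open>log 2 B' \<le> log 2 B\<close> by simp
      then have "ereal (- log 2 B) \<le> cost1 k E' p' lam''" using False unfolding cost1_def by simp
      then show ?thesis using c1 by (rule order_trans[rotated])
    qed
  qed
  moreover have "\<forall>v\<in>V. lam' v = ext n k mu f v" unfolding lam'_def by simp
  ultimately show ?thesis by blast
qed



definition psi :: "nat \<Rightarrow> nat \<Rightarrow> real" where "psi k d = phi k d (real d / real k)"

lemma psi_pos: assumes "k > 0" "d \<le> k" shows "psi k d > 0"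
proof (cases "d = k")
  case True then show ?thesis using assms by (simp add: psi_def phi_def)
next
  case False
  then have "real d / real k < 1" using assms by simp
  then have a: "(1 - real d / real k) ^ (k - d) > 0" by simp
  have b: "(real d / real k) ^ d > 0"
  proof (cases "d = 0")
    case False then show ?thesis using assms by (intro zero_less_power) simp
  qed simp
  show ?thesis using a b by (simp add: psi_def phi_def)
qed

lemma gibbs:
  assumes k: "k > 0" and d: "d \<le> k" and p: "0 \<le> p" "p \<le> 1"
  shows "phi k d p \<le> psi k d"
proof -
  consider "d = 0" | "d = k" | "0 < d \<and> d < k" using d by linarith
  then show ?thesis
  proof cases
    case 1
    then show ?thesis using p phi_le1[of p k d] by (simp add: psi_def phi_def)
  next
    case 2
    then show ?thesis using p k phi_le1[of p k d] by (simp add: psi_def phi_def)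
  next
    case 3
    define x where "x = real d / real k"
    have x: "0 < x" "x < 1" using 3 unfolding x_def by auto
    have kx: "real k * x = real d" using k unfolding x_def by simp
    have psipos: "psi k d > 0" using psi_pos k d by simp
    show ?thesis
    proof (cases "p = 0 \<or> p = 1")
      case True
      then have "phi k d p = 0" using 3 by (auto simp: phi_def)
      then show ?thesis using psipos by simp
    next
      case False
      then have p': "0 < p" "p < 1" using p by auto
      have l1: "ln (p / x) \<le> p / x - 1" using p' x by (intro ln_le_minus_one) simp
      have l2: "ln ((1 - p) / (1 - x)) \<le> (1 - p) / (1 - x) - 1" using p' x by (intro ln_le_minus_one) simp
      have e1: "real d * (p / x - 1) = real k * p - real d" using kx x by (simp add: field_simps)
      have e2: "real (k - d) * ((1 - p) / (1 - x) - 1) = real d - real k * p"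
      proof -
        have hk: "real (k - d) = real k * (1 - x)" using kx 3 by (simp add: of_nat_diff algebra_simps)
        have "real (k - d) * ((1 - p) / (1 - x) - 1) = real k * (1 - x) * ((1 - p) / (1 - x) - 1)"
          by (simp add: hk)
        also have "\<dots> = real k * (1 - p) - real k * (1 - x)" using x by (simp add: field_simps)
        also have "\<dots> = real d - real k * p" using kx by (simp add: algebra_simps)
        finally show ?thesis .
      qed
      have "real d * ln (p / x) + real (k - d) * ln ((1 - p) / (1 - x)) \<le> 0"
      proof -
        have "real d * ln (p / x) \<le> real d * (p / x - 1)" using l1 by (intro mult_left_mono) auto
        moreover have "real (k - d) * ln ((1 - p) / (1 - x)) \<le> real (k - d) * ((1 - p) / (1 - x) - 1)"
          using l2 by (intro mult_left_mono) auto
        ultimately show ?thesis using e1 e2 by linarith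
      qed
      moreover have A: "ln (p / x) = ln p - ln x" using p' x by (simp add: ln_div)
      moreover have B: "ln ((1 - p) / (1 - x)) = ln (1 - p) - ln (1 - x)" using p' x by (simp add: ln_div)
      ultimately have C: "real d * (ln p - ln x) + real (k - d) * (ln (1 - p) - ln (1 - x)) \<le> 0"
        by simp
      have "ln (phi k d p) = real d * ln p + real (k - d) * ln (1 - p)"
        using p' unfolding phi_def by (simp add: ln_mult ln_realpow)
      moreover have "ln (psi k d) = real d * ln x + real (k - d) * ln (1 - x)"
        using x unfolding psi_def phi_def x_def[symmetric] by (simp add: ln_mult ln_realpow)
      ultimately have "ln (phi k d p) \<le> ln (psi k d)" using C
        by (simp add: right_diff_distrib)
      moreover have "phi k d p > 0" using p' unfolding phi_def by simp
      ultimately show ?thesis using psipos by simp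
    qed
  qed
qed

lemma H_psi:
  assumes k: "k > 0" and d: "d \<le> k"
  shows "real k * H (real d / real k) = - log 2 (psi k d)"
proof -
  define x where "x = real d / real k"
  have kx: "real k * x = real d" using k unfolding x_def by simp
  have kx2: "real k * (1 - x) = real (k - d)" using kx d by (simp add: of_nat_diff algebra_simps)
  consider "d = 0" | "d = k" | "0 < d \<and> d < k" using d by linarith
  then show ?thesis
  proof cases
    case 1 then show ?thesis by (simp add: H_def psi_def phi_def)
  next
    case 2 then show ?thesis using k by (simp add: H_def psi_def phi_def)
  next
    case 3
    have x: "0 < x" "x < 1" using 3 unfolding x_def by auto
    have "log 2 (psi k d) = real d * log 2 x + real (k - d) * log 2 (1 - x)"
      unfolding psi_def phi_def x_def[symmetric] using x by (simp add: log_mult log_nat_power)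
    also have "\<dots> = real k * x * log 2 x + real k * (1 - x) * log 2 (1 - x)" using kx kx2 by simp
    finally show ?thesis unfolding x_def[symmetric] H_def by (simp add: algebra_simps)
  qed
qed

lemma H_nn: assumes "d \<le> k" shows "0 \<le> H (real d / real k)"
proof (cases "k = 0")
  case True then show ?thesis by (simp add: H_def)
next
  case False
  have "psi k d \<le> 1" unfolding psi_def using assms False by (intro phi_le1) auto
  then have "0 \<le> - log 2 (psi k d)" using psi_pos[of k d] False assms by simp
  then have "0 \<le> real k * H (real d / real k)" using H_psi[of k d] False assms by simp
  then show ?thesis using False by (simp add: zero_le_mult_iff)
qed

lemma cost2_log:
  assumes k: "k > 0" and finE: "finite E"
  shows "real k * cost2 k E lam = - log 2 (\<Prod>e\<in>E. psi k (edge_dist k lam e))"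
proof -
  have "real k * cost2 k E lam = (\<Sum>e\<in>E. real k * H (real (edge_dist k lam e) / real k))"
    unfolding cost2_def by (simp add: sum_distrib_left)
  also have "\<dots> = (\<Sum>e\<in>E. - log 2 (psi k (edge_dist k lam e)))"
    using H_psi[OF k edge_dist_le] by simp
  also have "\<dots> = - log 2 (\<Prod>e\<in>E. psi k (edge_dist k lam e))"
    by (subst log_prod2) (use finE psi_pos[OF k edge_dist_le] in \<open>auto simp: sum_negf\<close>)
  finally show ?thesis .
qed

theorem version2:
  assumes n1: "n \<ge> 1" and len: "\<forall>u<n. length (mu u) = k"
  shows "\<exists>V E lam f. AML2_optimal n k mu V E lam \<and> (\<forall>v\<in>V. lam v = ext n k mu f v)"
proof -
  define P where "P = (\<lambda>(x :: nat set \<times> (nat \<times> nat) set \<times> (nat \<Rightarrow> bool list)).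
      tree_n n (fst x) (fst (snd x)) \<and> assignment_ok n k mu (fst x) (snd (snd x)))"
  obtain V0 E0 lam0 where "tree_n n V0 E0 \<and> assignment_ok n k mu V0 lam0"
    using feasible_exists[OF n1 len] by blast
  then have x0: "P (V0, E0, lam0)" unfolding P_def by simp
  have "\<exists>x. P x \<and> (\<forall>y. P y \<longrightarrow>
      (\<Sum>e\<in>fst (snd x). H (real (edge_dist k (snd (snd x)) e) / real k))
      \<le> (\<Sum>e\<in>fst (snd y). H (real (edge_dist k (snd (snd y)) e) / real k)))"
    by (rule min_exists[where P = P and xz = "(V0, E0, lam0)" and Es = "\<lambda>x. fst (snd x)"
           and dd = "\<lambda>x e. edge_dist k (snd (snd x)) e" and k = k and h = "\<lambda>d. H (real d / real k)"])
       (use x0 in \<open>auto simp: P_def intro: tree_finE edge_dist_le H_nn\<close>)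
  then obtain xx where Pxx: "P xx" and optx: "\<forall>y. P y \<longrightarrow>
      (\<Sum>e\<in>fst (snd xx). H (real (edge_dist k (snd (snd xx)) e) / real k))
      \<le> (\<Sum>e\<in>fst (snd y). H (real (edge_dist k (snd (snd y)) e) / real k))" by blast
  obtain V E lam where xx: "xx = (V, E, lam)" by (cases xx) blast
  have P: "P (V, E, lam)" using Pxx xx by simp
  have opt: "cost2 k E lam \<le> cost2 k E' lam'" if "P (V', E', lam')" for V' E' lam'
    using optx[rule_format, OF that] xx unfolding cost2_def by simp
  have tr: "tree_n n V E" and ok: "assignment_ok n k mu V lam" using P by (auto simp: P_def)
  have finE: "finite E" using tr by (rule tree_finE)
  obtain lam' f where ok': "assignment_ok n k mu V lam'" and c: "cost2 k E lam' \<le> cost2 k E lam"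
    and ex: "\<forall>v\<in>V. lam' v = ext n k mu f v"
  proof (cases "k = 0")
    case True
    have "\<forall>v\<in>V. lam v = ext n k mu (\<lambda>_ _. False) v"
      using ok True unfolding assignment_ok_def ext_def by auto
    then show ?thesis using that ok by blast
  next
    case False
    then have k: "k > 0" by simp
    define x where "x e = real (edge_dist k lam e) / real k" for e
    have xr: "0 \<le> x e \<and> x e \<le> 1" for e using edge_dist_le[of k lam e] k unfolding x_def by auto
    obtain f where f: "Lk k E x (\<lambda>e. 1 - x e) lam \<le> Lk k E x (\<lambda>e. 1 - x e) (ext n k mu f)"
    proof -
      have "\<forall>e\<in>E. x e \<ge> 0 \<and> 1 - x e \<ge> 0" using xr by auto
      moreover have "\<forall>v<n. lam v = mu v" using ok unfolding assignment_ok_def by auto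
      ultimately show ?thesis using lemmaA[OF finE, of x "\<lambda>e. 1 - x e" n lam mu k] that by blast
    qed
    define lam' where "lam' = ext n k mu f"
    have L0: "Lk k E x (\<lambda>e. 1 - x e) lam = (\<Prod>e\<in>E. psi k (edge_dist k lam e))"
      unfolding Lk_def psi_def phi_def x_def ..
    have L1: "Lk k E x (\<lambda>e. 1 - x e) lam' \<le> (\<Prod>e\<in>E. psi k (edge_dist k lam' e))"
      unfolding Lk_def
      by (rule prod_mono) (use xr gibbs[OF k edge_dist_le] in \<open>auto simp: phi_def\<close>)
    have pos: "0 < (\<Prod>e\<in>E. psi k (edge_dist k lam e))"
      using psi_pos[OF k edge_dist_le] by (auto intro: prod_pos)
    have le: "(\<Prod>e\<in>E. psi k (edge_dist k lam e)) \<le> (\<Prod>e\<in>E. psi k (edge_dist k lam' e))"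
      using f L0 L1 unfolding lam'_def by linarith
    then have "log 2 (\<Prod>e\<in>E. psi k (edge_dist k lam e)) \<le> log 2 (\<Prod>e\<in>E. psi k (edge_dist k lam' e))"
      using pos by simp
    then have "real k * cost2 k E lam' \<le> real k * cost2 k E lam"
      unfolding cost2_log[OF k finE] by simp
    then have "cost2 k E lam' \<le> cost2 k E lam" using k by simp
    moreover have "assignment_ok n k mu V lam'" unfolding lam'_def by (rule ext_ok[OF len])
    ultimately show ?thesis using that unfolding lam'_def by blast
  qed
  have "AML2_optimal n k mu V E lam'"
    unfolding AML2_optimal_def AML2_feasible_def
  proof (intro conjI allI impI)
    show "tree_n n V E" by (rule tr)
    show "assignment_ok n k mu V lam'" by (rule ok')
    fix V' E' lam'' assume "tree_n n V' E' \<and> assignment_ok n k mu V' lam''"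
    then have "cost2 k E lam \<le> cost2 k E' lam''" using opt[of V' E' lam''] by (simp add: P_def)
    then show "cost2 k E lam' \<le> cost2 k E' lam''" using c by simp
  qed
  then show ?thesis using ex by blast
qed


theorem proposition1:
  fixes n k :: nat and mu :: "nat \<Rightarrow> bool list"
  assumes "n \<ge> 1"
    and "\<forall>u<n. length (mu u) = k"
  shows "(\<exists>V E p lam f. AML1_optimal n k mu V E p lam \<and> (\<forall>v\<in>V. lam v = ext n k mu f v))
       \<and> (\<exists>V E lam f. AML2_optimal n k mu V E lam \<and> (\<forall>v\<in>V. lam v = ext n k mu f v))"
  using version1[OF assms] version2[OF assms] by blast

end
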